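(* Let $\hat\rho$ be a density operator on $L^2(\mathbb R)$ with bounded Fock support. Then there exists a unique $m\in\mathbb N$ such that $\hat\rho\in\mathcal D^m\setminus\mathcal D^{m-1}$ (with the convention $\mathcal D^{-1}=\emptyset$). Moreover, $\mathcal V_t[\hat\rho]/\mathrm{Tr}\,\mathcal V_t[\hat\rho]$ converges to $\frac1{2^m}\sum_{k=0}^m\binom mk|k\rangle\langle k|$ as $t\to\infty$.
   Context: Let $\hat a$ be the annihilation operator on $L^2(\mathbb R)$, $\hat n=\hat a^\dagger\hat a$, $\{|k\rangle\}$ the Fock basis, and $\hat P_N=\sum_{k=0}^N|k\rangle\langle k|$. $\mathcal D^N$ is the set of density operators $\hat\rho$ with $\hat P_N\hat\rho\hat P_N=\hat\rho$; a density operator has bounded Fock support if it lies in some $\mathcal D^N$. For $t>0$, the Vertigo map on such operators is $\mathcal V_t[\hat A]=\sum_{k\ge0}\frac{(t-1)^k}{k!}t^{\hat n/2}\hat a^k\hat A\hat a^{\dagger k}t^{\hat n/2}$ (finite sum), equivalently characterized on Wigner functions $W_{\hat A}(\alpha)=\frac2\pi\mathrm{Tr}[\hat A\hat D(\alpha)(-1)^{\hat n}\hat D(\alpha)^\dagger]$, $\hat D(\alpha)=\exp(\alpha\hat a^\dagger-\alpha^*\hat a)$, by $W_{\mathcal V_t[\hat A]}(\alpha)=W_{\hat A}(\sqrt t\alpha)e^{2(t-1)|\alpha|^2}$. *)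

theory Defs
  imports "HOL-Analysis.Analysis"
begin

text \<open>Operators on L^2(R) are represented by their matrix elements in the Fock basis:
  an operator A is the function (i,j) |-> <i|A|j>. All operators occurring here
  (density operators with bounded Fock support, a, a^dagger, t^(n/2)) map the finite
  span of Fock states into itself, so all sums below have only finitely many nonzero terms.\<close>

type_synonym fmat = "nat \<Rightarrow> nat \<Rightarrow> complex"

definition mat_mult :: "fmat \<Rightarrow> fmat \<Rightarrow> fmat" where
  "mat_mult M N = (\<lambda>i j. \<Sum>\<^sub>\<infinity>l. M i l * N l j)"

definition adj :: "fmat \<Rightarrow> fmat" where
  "adj M = (\<lambda>i j. cnj (M j i))"

definition id_mat :: fmat where
  "id_mat = (\<lambda>i j. if i = j then 1 else 0)"

definition ann :: fmat where
  "ann = (\<lambda>i j. if j = Suc i then complex_of_real (sqrt (real j)) else 0)"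

definition ann_pow :: "nat \<Rightarrow> fmat" where
  "ann_pow k = (mat_mult ann ^^ k) id_mat"

definition tn_half :: "real \<Rightarrow> fmat" where
  "tn_half t = (\<lambda>i j. if i = j then complex_of_real (t powr (real i / 2)) else 0)"

definition trace :: "fmat \<Rightarrow> complex" where
  "trace A = (\<Sum>\<^sub>\<infinity>i. A i i)"

definition density_op :: "fmat \<Rightarrow> bool" where
  "density_op \<rho> \<longleftrightarrow>
     (\<forall>i j. \<rho> i j = cnj (\<rho> j i)) \<and>
     (\<forall>(v :: nat \<Rightarrow> complex) M.
        (\<Sum>i\<le>M. \<Sum>j\<le>M. cnj (v i) * \<rho> i j * v j) \<in> \<real> \<and>
        0 \<le> Re (\<Sum>i\<le>M. \<Sum>j\<le>M. cnj (v i) * \<rho> i j * v j)) \<and>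
     trace \<rho> = 1"

text \<open>D^N: density operators with P_N rho P_N = rho.\<close>
definition in_D :: "nat \<Rightarrow> fmat \<Rightarrow> bool" where
  "in_D N \<rho> \<longleftrightarrow> density_op \<rho> \<and> (\<forall>i j. (N < i \<or> N < j) \<longrightarrow> \<rho> i j = 0)"

definition bounded_fock_support :: "fmat \<Rightarrow> bool" where
  "bounded_fock_support \<rho> \<longleftrightarrow> (\<exists>N. in_D N \<rho>)"

text \<open>Vertigo map V_t[A] = sum_k (t-1)^k/k! t^(n/2) a^k A a^dagger^k t^(n/2).\<close>
definition vertigo :: "real \<Rightarrow> fmat \<Rightarrow> fmat" where
  "vertigo t A = (\<lambda>i j. \<Sum>\<^sub>\<infinity>k. complex_of_real ((t - 1) ^ k / fact k) *
      mat_mult (tn_half t) (mat_mult (ann_pow k) (mat_mult A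
        (mat_mult (adj (ann_pow k)) (tn_half t)))) i j)"

definition binom_state :: "nat \<Rightarrow> fmat" where
  "binom_state m = (\<lambda>i j. if i = j \<and> i \<le> m
      then complex_of_real (real (m choose i) / 2 ^ m) else 0)"

end

theory Submission imports Defs begin

lemma infsum_fin:
  fixes f :: "nat \<Rightarrow> 'b::{comm_monoid_add, t2_space}"
  assumes "\<And>l. l > N \<Longrightarrow> f l = 0"
  shows "infsum f UNIV = sum f {..N}"
proof -
  have "infsum f UNIV = infsum f {..N}"
    by (rule infsum_cong_neutral) (use assms in auto)
  then show ?thesis by simp
qed

lemma infsum_pt:
  fixes f :: "nat \<Rightarrow> 'b::{comm_monoid_add, t2_space}"
  assumes "\<And>l. l \<noteq> a \<Longrightarrow> f l = 0"
  shows "infsum f UNIV = f a"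
proof -
  have "infsum f UNIV = infsum f {a}"
    by (rule infsum_cong_neutral) (use assms in auto)
  then show ?thesis by simp
qed

definition cc :: "nat \<Rightarrow> nat \<Rightarrow> real" where
  "cc k i = sqrt (fact (i + k) / fact i)"

lemma ann_pow_eq: "ann_pow k i j = (if j = i + k then complex_of_real (cc k i) else 0)"
proof (induction k arbitrary: i j)
  case 0
  then show ?case by (simp add: ann_pow_def id_mat_def cc_def)
next
  case (Suc k)
  have "ann_pow (Suc k) i j = mat_mult ann (ann_pow k) i j"
    by (simp add: ann_pow_def)
  also have "\<dots> = ann i (Suc i) * ann_pow k (Suc i) j"
    unfolding mat_mult_def by (rule infsum_pt) (simp add: ann_def)
  also have "\<dots> = (if j = i + Suc k then complex_of_real (cc (Suc k) i) else 0)"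
  proof -
    have "sqrt (real (Suc i)) * cc k (Suc i) = cc (Suc k) i"
    proof -
      have "real (Suc i) * (fact (Suc i + k) / fact (Suc i)) = fact (i + Suc k) / fact i"
        by (simp add: fact_Suc[of i] del: fact_Suc)
      then show ?thesis unfolding cc_def by (metis real_sqrt_mult)
    qed
    then show ?thesis using Suc by (auto simp: ann_def simp flip: of_real_mult)
  qed
  finally show ?case .
qed

lemma mm_T_left: "mat_mult (tn_half t) M i j = complex_of_real (t powr (real i / 2)) * M i j"
  unfolding mat_mult_def by (subst infsum_pt[of i]) (auto simp: tn_half_def)

lemma mm_adjT: "mat_mult (adj (ann_pow k)) (tn_half t) l j =
   (if l = j + k then complex_of_real (cc k j * t powr (real j / 2)) else 0)"
  unfolding mat_mult_def by (subst infsum_pt[of j]) (auto simp: tn_half_def adj_def ann_pow_eq)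

lemma mm_ann_left: "mat_mult (ann_pow k) M i j = complex_of_real (cc k i) * M (i + k) j"
  unfolding mat_mult_def by (subst infsum_pt[of "i+k"]) (auto simp: ann_pow_eq)

lemma mm_rho: "mat_mult \<rho> (mat_mult (adj (ann_pow k)) (tn_half t)) i j =
   \<rho> i (j + k) * complex_of_real (cc k j * t powr (real j / 2))"
  unfolding mat_mult_def[of \<rho>] by (subst infsum_pt[of "j+k"]) (auto simp: mm_adjT)

lemma inner_eq: "mat_mult (tn_half t) (mat_mult (ann_pow k) (mat_mult \<rho>
        (mat_mult (adj (ann_pow k)) (tn_half t)))) i j =
   complex_of_real (t powr (real i / 2) * t powr (real j / 2) * cc k i * cc k j) * \<rho> (i + k) (j + k)"
  by (simp add: mm_T_left mm_ann_left mm_rho)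

lemma vert_eq:
  assumes supp: "\<And>i j. m < i \<or> m < j \<Longrightarrow> \<rho> i j = 0"
  shows "vertigo t \<rho> i j = (\<Sum>k\<le>m. complex_of_real ((t - 1) ^ k / fact k *
     (t powr (real i / 2) * t powr (real j / 2) * cc k i * cc k j)) * \<rho> (i + k) (j + k))"
  unfolding vertigo_def inner_eq
  by (subst infsum_fin[of m]) (auto simp: supp mult.assoc)

lemma vert_zero:
  assumes supp: "\<And>i j. m < i \<or> m < j \<Longrightarrow> \<rho> i j = 0" and "m < i"
  shows "vertigo t \<rho> i j = 0"
  using assms by (simp add: vert_eq[OF supp])

lemma trace_eq:
  assumes supp: "\<And>i j. m < i \<or> m < j \<Longrightarrow> \<rho> i j = 0"
  shows "Defs.trace (vertigo t \<rho>) = (\<Sum>i\<le>m. vertigo t \<rho> i i)"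
  unfolding trace_def by (rule infsum_fin) (simp add: vert_zero[OF supp])

lemma frac_lim: "((\<lambda>t::real. (t - 1) / t) \<longlongrightarrow> 1) at_top"
proof -
  have "((\<lambda>t::real. 1 - inverse t) \<longlongrightarrow> 1 - 0) at_top"
    by (intro tendsto_intros tendsto_inverse_0_at_top filterlim_ident)
  moreover have "\<forall>\<^sub>F t in at_top. 1 - inverse t = (t - 1) / (t::real)"
    using eventually_gt_at_top[of 0] by eventually_elim (simp add: field_simps)
  ultimately show ?thesis by (simp add: tendsto_cong)
qed

lemma g_lim:
  assumes "i + k \<le> m" "j + k \<le> m"
  shows "((\<lambda>t::real. (t - 1) ^ k * (t powr (real i / 2) * t powr (real j / 2)) / t ^ m)
     \<longlongrightarrow> (if i = j \<and> i + k = m then 1 else 0)) at_top"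
proof -
  define e where "e = real k + real i / 2 + real j / 2 - real m"
  have ev: "\<forall>\<^sub>F t in at_top. ((t - 1) / t) ^ k * t powr e =
      (t - 1) ^ k * (t powr (real i / 2) * t powr (real j / 2)) / t ^ m"
    using eventually_gt_at_top[of 0]
  proof eventually_elim
    case (elim t)
    have "t powr e = t powr real k * t powr (real i / 2) * t powr (real j / 2) / t powr real m"
      unfolding e_def by (simp add: powr_add powr_diff)
    also have "\<dots> = t ^ k * t powr (real i / 2) * t powr (real j / 2) / t ^ m"
      using elim by (simp add: powr_realpow)
    finally have "((t - 1) / t) ^ k * t powr e = ((t - 1) / t) ^ k *
      (t ^ k * t powr (real i / 2) * t powr (real j / 2) / t ^ m)" by simp
    also have "\<dots> = (t - 1) ^ k * (t powr (real i / 2) * t powr (real j / 2)) / t ^ m"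
      using elim by (simp add: power_divide)
    finally show ?case .
  qed
  have lim1: "((\<lambda>t::real. ((t - 1) / t) ^ k) \<longlongrightarrow> 1) at_top"
    using tendsto_power[OF frac_lim, of k] by simp
  show ?thesis
  proof (cases "i = j \<and> i + k = m")
    case True
    then have "e = 0" unfolding e_def by simp
    have "((\<lambda>t::real. ((t - 1) / t) ^ k * t powr e) \<longlongrightarrow> 1) at_top"
    proof -
      have "\<forall>\<^sub>F t in at_top. ((t - 1) / t) ^ k = ((t - 1) / t) ^ k * t powr e"
        using eventually_gt_at_top[of 0] by eventually_elim (simp add: \<open>e = 0\<close>)
      then show ?thesis by (rule iffD1[OF tendsto_cong lim1])
    qed
    moreover have "(if i = j \<and> i + k = m then 1 else 0) = (1::real)" using True by simp
    ultimately show ?thesis by (simp only: tendsto_cong[OF ev, symmetric])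
  next
    case False
    then have "e < 0" unfolding e_def using assms by linarith
    have "((\<lambda>t::real. t powr e) \<longlongrightarrow> 0) at_top"
      by (rule tendsto_neg_powr[OF \<open>e < 0\<close> filterlim_ident])
    from tendsto_mult[OF lim1 this]
    have "((\<lambda>t::real. ((t - 1) / t) ^ k * t powr e) \<longlongrightarrow> 0) at_top" by simp
    moreover have "(if i = j \<and> i + k = m then 1 else 0) = (0::real)" using False by simp
    ultimately show ?thesis by (simp only: tendsto_cong[OF ev, symmetric])
  qed
qed

lemma real_rearr: "(a::real) * (b * c) / d * (e * f / g) = (a / g * (b * c * e * f)) / d"
  by (simp add: divide_inverse mult_ac)

definition Lc :: "nat \<Rightarrow> nat \<Rightarrow> nat \<Rightarrow> nat \<Rightarrow> real" where
  "Lc m i j k = (if i = j \<and> i + k = m then cc k i * cc k j / fact k else 0)"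

lemma term_lim:
  assumes supp: "\<And>i j. m < i \<or> m < j \<Longrightarrow> \<rho> i j = 0"
  shows "((\<lambda>t::real. complex_of_real ((t - 1) ^ k / fact k *
     (t powr (real i / 2) * t powr (real j / 2) * cc k i * cc k j)) * \<rho> (i + k) (j + k)
       / complex_of_real (t ^ m))
     \<longlongrightarrow> complex_of_real (Lc m i j k) * \<rho> (i + k) (j + k)) at_top"
proof (cases "\<rho> (i + k) (j + k) = 0")
  case True
  show ?thesis unfolding True mult_zero_right div_0 by (rule tendsto_const)
next
  case False
  have "\<not> (m < i + k \<or> m < j + k)"
  proof
    assume "m < i + k \<or> m < j + k"
    then have "\<rho> (i + k) (j + k) = 0" by (rule supp)
    with False show False by simp
  qed
  then have le: "i + k \<le> m" "j + k \<le> m" by simp_all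
  have eq: "complex_of_real ((t - 1) ^ k / fact k *
     (t powr (real i / 2) * t powr (real j / 2) * cc k i * cc k j)) * \<rho> (i + k) (j + k)
       / complex_of_real (t ^ m) =
     complex_of_real ((t - 1) ^ k * (t powr (real i / 2) * t powr (real j / 2)) / t ^ m
        * (cc k i * cc k j / fact k)) * \<rho> (i + k) (j + k)" for t
  proof -
    have "(t - 1) ^ k * (t powr (real i / 2) * t powr (real j / 2)) / t ^ m * (cc k i * cc k j / fact k)
      = ((t - 1) ^ k / fact k * (t powr (real i / 2) * t powr (real j / 2) * cc k i * cc k j)) / t ^ m"
      by (rule real_rearr)
    then show ?thesis by (simp only: of_real_divide times_divide_eq_left)
  qed
  have "((\<lambda>t::real. (t - 1) ^ k * (t powr (real i / 2) * t powr (real j / 2)) / t ^ m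
        * (cc k i * cc k j / fact k)) \<longlongrightarrow> Lc m i j k) at_top"
  proof -
    have Leq: "Lc m i j k = (if i = j \<and> i + k = m then 1 else 0) * (cc k i * cc k j / fact k)"
      by (simp add: Lc_def)
    have "((\<lambda>t::real. (t - 1) ^ k * (t powr (real i / 2) * t powr (real j / 2)) / t ^ m
        * (cc k i * cc k j / fact k)) \<longlongrightarrow> (if i = j \<and> i + k = m then 1 else 0) * (cc k i * cc k j / fact k)) at_top"
      by (rule tendsto_mult_right[OF g_lim[OF le]])
    then show ?thesis by (simp only: Leq)
  qed
  then show ?thesis unfolding eq
    by (intro tendsto_mult_right tendsto_of_real)
qed

lemma cc_sq: "cc k i * cc k i = fact (i + k) / fact i"
  unfolding cc_def by simp

lemma sum_Lc:
  "(\<Sum>k\<le>m. complex_of_real (Lc m i j k) * \<rho> (i + k) (j + k)) =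
     (if i = j \<and> i \<le> m then of_nat (m choose i) * \<rho> m m else 0)"
proof (cases "i = j \<and> i \<le> m")
  case True
  have "(\<Sum>k\<le>m. complex_of_real (Lc m i j k) * \<rho> (i + k) (j + k)) =
     (\<Sum>k\<le>m. if k = m - i then complex_of_real (cc (m - i) i * cc (m - i) i / fact (m - i)) * \<rho> m m else 0)"
  proof (rule sum.cong)
    fix k assume "k \<in> {..m}"
    show "complex_of_real (Lc m i j k) * \<rho> (i + k) (j + k) =
      (if k = m - i then complex_of_real (cc (m - i) i * cc (m - i) i / fact (m - i)) * \<rho> m m else 0)"
      using True by (cases "k = m - i") (auto simp: Lc_def)
  qed simp
  also have "\<dots> = complex_of_real (cc (m - i) i * cc (m - i) i / fact (m - i)) * \<rho> m m"
    by simp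
  also have "cc (m - i) i * cc (m - i) i / fact (m - i) = real (m choose i)"
    using True by (simp add: cc_sq binomial_fact)
  finally show ?thesis using True by simp
next
  case False
  then have "\<And>k. Lc m i j k = 0" unfolding Lc_def by auto
  then have "(\<Sum>k\<le>m. complex_of_real (Lc m i j k) * \<rho> (i + k) (j + k)) = 0" by simp
  moreover have "(if i = j \<and> i \<le> m then of_nat (m choose i) * \<rho> m m else 0) = (0::complex)"
    using False by (rule if_not_P)
  ultimately show ?thesis by (simp only:)
qed

lemma V_lim:
  assumes supp: "\<And>i j. m < i \<or> m < j \<Longrightarrow> \<rho> i j = 0"
  shows "((\<lambda>t. vertigo t \<rho> i j / complex_of_real (t ^ m))
     \<longlongrightarrow> (if i = j \<and> i \<le> m then of_nat (m choose i) * \<rho> m m else 0)) at_top"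
proof -
  have "((\<lambda>t. \<Sum>k\<le>m. complex_of_real ((t - 1) ^ k / fact k *
     (t powr (real i / 2) * t powr (real j / 2) * cc k i * cc k j)) * \<rho> (i + k) (j + k)
       / complex_of_real (t ^ m))
     \<longlongrightarrow> (\<Sum>k\<le>m. complex_of_real (Lc m i j k) * \<rho> (i + k) (j + k))) at_top"
    by (intro tendsto_sum term_lim supp)
  moreover have "(\<lambda>t. vertigo t \<rho> i j / complex_of_real (t ^ m)) = (\<lambda>t. \<Sum>k\<le>m. complex_of_real ((t - 1) ^ k / fact k *
     (t powr (real i / 2) * t powr (real j / 2) * cc k i * cc k j)) * \<rho> (i + k) (j + k)
       / complex_of_real (t ^ m))"
    by (simp only: vert_eq[OF supp] sum_divide_distrib)
  ultimately show ?thesis by (simp only: sum_Lc)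
qed

lemma tr_lim:
  assumes supp: "\<And>i j. m < i \<or> m < j \<Longrightarrow> \<rho> i j = 0"
  shows "((\<lambda>t. Defs.trace (vertigo t \<rho>) / complex_of_real (t ^ m)) \<longlongrightarrow> 2 ^ m * \<rho> m m) at_top"
proof -
  have "((\<lambda>t. \<Sum>i\<le>m. vertigo t \<rho> i i / complex_of_real (t ^ m))
     \<longlongrightarrow> (\<Sum>i\<le>m. (if i = i \<and> i \<le> m then of_nat (m choose i) * \<rho> m m else 0))) at_top"
    by (intro tendsto_sum V_lim supp)
  also have "(\<Sum>i\<le>m. (if i = i \<and> i \<le> m then of_nat (m choose i) * \<rho> m m else 0)) =
      (\<Sum>i\<le>m. of_nat (m choose i)) * \<rho> m m"
    by (simp add: sum_distrib_right)
  also have "(\<Sum>i\<le>m. of_nat (m choose i)) = (of_nat (2 ^ m) :: complex)"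
    by (simp only: of_nat_sum[symmetric] choose_row_sum)
  finally have lim: "((\<lambda>t. \<Sum>i\<le>m. vertigo t \<rho> i i / complex_of_real (t ^ m))
     \<longlongrightarrow> 2 ^ m * \<rho> m m) at_top" by simp
  have "(\<lambda>t. Defs.trace (vertigo t \<rho>) / complex_of_real (t ^ m)) = (\<lambda>t. \<Sum>i\<le>m. vertigo t \<rho> i i / complex_of_real (t ^ m))"
    by (simp only: trace_eq[OF supp] sum_divide_distrib)
  with lim show ?thesis by simp
qed

lemma ratio_lim:
  assumes supp: "\<And>i j. m < i \<or> m < j \<Longrightarrow> \<rho> i j = 0" and nz: "\<rho> m m \<noteq> 0"
  shows "((\<lambda>t. vertigo t \<rho> i j / Defs.trace (vertigo t \<rho>)) \<longlongrightarrow> binom_state m i j) at_top"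
proof -
  have nz2: "2 ^ m * \<rho> m m \<noteq> (0::complex)" using nz by simp
  have L: "((\<lambda>t. (vertigo t \<rho> i j / complex_of_real (t ^ m)) / (Defs.trace (vertigo t \<rho>) / complex_of_real (t ^ m)))
     \<longlongrightarrow> (if i = j \<and> i \<le> m then of_nat (m choose i) * \<rho> m m else 0) / (2 ^ m * \<rho> m m)) at_top"
    by (rule tendsto_divide[OF V_lim[where \<rho>=\<rho> and m=m and i=i and j=j, OF supp] tr_lim[where \<rho>=\<rho> and m=m, OF supp] nz2])
  have B: "(if i = j \<and> i \<le> m then of_nat (m choose i) * \<rho> m m else 0) / (2 ^ m * \<rho> m m)
      = binom_state m i j"
  proof (cases "i = j \<and> i \<le> m")
    case True
    have "of_nat (m choose i) * \<rho> m m / (2 ^ m * \<rho> m m) = of_nat (m choose i) / (2 ^ m :: complex)"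
      using nz by simp
    then show ?thesis using True unfolding binom_state_def by simp
  next
    case False
    then show ?thesis unfolding binom_state_def by auto
  qed
  have E: "\<forall>\<^sub>F t in at_top. (vertigo t \<rho> i j / complex_of_real (t ^ m)) / (Defs.trace (vertigo t \<rho>) / complex_of_real (t ^ m))
      = vertigo t \<rho> i j / Defs.trace (vertigo t \<rho>)"
    using eventually_gt_at_top[of "0::real"]
  proof eventually_elim
    case (elim t)
    then have "complex_of_real (t ^ m) \<noteq> 0" by simp
    then show ?case by (simp add: divide_divide_eq_left divide_divide_eq_right)
  qed
  have "((\<lambda>t. vertigo t \<rho> i j / Defs.trace (vertigo t \<rho>)) \<longlongrightarrow>
     (if i = j \<and> i \<le> m then of_nat (m choose i) * \<rho> m m else 0) / (2 ^ m * \<rho> m m)) at_top"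
    by (rule iffD1[OF tendsto_cong[OF E] L])
  then show ?thesis unfolding B .
qed

lemma sum_two:
  assumes "finite S" "j \<in> S" "m \<in> S" "j \<noteq> m" "\<And>l. l \<in> S \<Longrightarrow> l \<noteq> j \<Longrightarrow> l \<noteq> m \<Longrightarrow> f l = 0"
  shows "sum f S = f j + f m"
proof -
  have "sum f S = sum f {j, m}"
    using sum.mono_neutral_left[of S "{j,m}" f] assms by auto
  then show ?thesis using assms(4) by simp
qed

lemma psd_row:
  assumes dens: "density_op \<rho>" and z: "\<rho> m m = 0"
  shows "\<rho> j m = 0"
proof (rule ccontr)
  assume bnz: "\<rho> j m \<noteq> 0"
  define b where "b = \<rho> j m"
  define a where "a = \<rho> j j"
  have jm: "j \<noteq> m" using bnz z by auto
  have dd: "(\<forall>i j. \<rho> i j = cnj (\<rho> j i)) \<and>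
     (\<forall>(v :: nat \<Rightarrow> complex) M.
        (\<Sum>i\<le>M. \<Sum>j\<le>M. cnj (v i) * \<rho> i j * v j) \<in> \<real> \<and>
        0 \<le> Re (\<Sum>i\<le>M. \<Sum>j\<le>M. cnj (v i) * \<rho> i j * v j))"
    using dens unfolding density_op_def by (elim conjE) (intro conjI)
  have herm: "\<And>i l. \<rho> i l = cnj (\<rho> l i)" using dd by (elim conjE) (rule spec2)
  have mj: "\<rho> m j = cnj b" unfolding b_def by (rule herm)
  define n where "n = (Re b)\<^sup>2 + (Im b)\<^sup>2"
  have npos: "n > 0" unfolding n_def using bnz b_def
    by (metis complex_eq_iff sum_power2_gt_zero_iff zero_complex.simps)
  define x where "x = (\<bar>Re a\<bar> + 1) / (2 * n)"
  define s where "s = - (complex_of_real x * cnj b)"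
  define v where "v = (\<lambda>l. if l = j then 1 else if l = m then s else (0::complex))"
  define M where "M = max j m"
  have psd: "0 \<le> Re (\<Sum>i\<le>M. \<Sum>l\<le>M. cnj (v i) * \<rho> i l * v l)"
    using dd by (elim conjE) (drule spec2[of _ v M], elim conjE)
  have inner: "(\<Sum>l\<le>M. cnj (v i) * \<rho> i l * v l) = cnj (v i) * \<rho> i j * v j + cnj (v i) * \<rho> i m * v m" for i
    by (rule sum_two) (auto simp: M_def jm v_def)
  have "(\<Sum>i\<le>M. \<Sum>l\<le>M. cnj (v i) * \<rho> i l * v l) =
      (cnj (v j) * \<rho> j j * v j + cnj (v j) * \<rho> j m * v m) +
      (cnj (v m) * \<rho> m j * v j + cnj (v m) * \<rho> m m * v m)"
    unfolding inner by (rule sum_two) (auto simp: M_def jm v_def)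
  also have "\<dots> = a + b * s + cnj s * cnj b"
    using jm by (simp add: v_def a_def b_def mj z)
  also have "\<dots> = a - 2 * complex_of_real (x * n)"
  proof -
    have bb: "b * cnj b = complex_of_real n" unfolding n_def by (rule complex_mult_cnj)
    have "b * s = - (complex_of_real x * (b * cnj b))" unfolding s_def by (simp add: algebra_simps)
    moreover have "cnj s * cnj b = - (complex_of_real x * (b * cnj b))" unfolding s_def by (simp add: algebra_simps)
    ultimately show ?thesis unfolding bb by simp
  qed
  finally have Q: "Re (\<Sum>i\<le>M. \<Sum>l\<le>M. cnj (v i) * \<rho> i l * v l) = Re a - 2 * x * n"
    by simp
  have "2 * x * n = \<bar>Re a\<bar> + 1" unfolding x_def using npos by simp
  then show False using psd Q by linarith
qed

lemma in_D_mono: "in_D a \<rho> \<Longrightarrow> a \<le> b \<Longrightarrow> in_D b \<rho>"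
  unfolding in_D_def by (auto simp del: less_Suc_eq)

lemma diag_nz:
  assumes dens: "density_op \<rho>" and D: "in_D m \<rho>" and nD: "\<forall>m'. m = Suc m' \<longrightarrow> \<not> in_D m' \<rho>"
  shows "\<rho> m m \<noteq> 0"
proof
  assume z: "\<rho> m m = 0"
  have supp: "\<And>i j. m < i \<or> m < j \<Longrightarrow> \<rho> i j = 0" using D unfolding in_D_def by blast
  have herm0: "\<forall>i l. \<rho> i l = cnj (\<rho> l i)" using dens unfolding density_op_def by (elim conjE)
  have tr1: "Defs.trace \<rho> = 1" using dens unfolding density_op_def by (elim conjE)
  have herm: "\<And>i l. \<rho> i l = cnj (\<rho> l i)" using herm0 by blast
  have col: "\<rho> j m = 0" for j using psd_row[OF dens z] .
  have row: "\<rho> m j = 0" for j using herm[of m j] col[of j] by simp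
  show False
  proof (cases m)
    case 0
    have "Defs.trace \<rho> = \<rho> 0 0" unfolding trace_def
      by (rule infsum_pt) (use supp 0 in auto)
    then show False using tr1 z 0 by simp
  next
    case (Suc m')
    then have "\<not> in_D m' \<rho>" using nD by blast
    then obtain i j where ij: "m' < i \<or> m' < j" "\<rho> i j \<noteq> 0" using dens unfolding in_D_def by auto
    then have "i \<le> m" "j \<le> m" using supp by (meson not_le)+
    then have "i = m \<or> j = m" using ij(1) Suc by auto
    then show False using ij(2) row col by auto
  qed
qed

theorem lemma12:
  fixes \<rho> :: fmat
  assumes "density_op \<rho>" and "bounded_fock_support \<rho>"
  shows "(\<exists>!m::nat. in_D m \<rho> \<and> (\<forall>m'. m = Suc m' \<longrightarrow> \<not> in_D m' \<rho>)) \<and>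
         (\<forall>m::nat. in_D m \<rho> \<and> (\<forall>m'. m = Suc m' \<longrightarrow> \<not> in_D m' \<rho>) \<longrightarrow>
            (\<forall>i j. ((\<lambda>t. vertigo t \<rho> i j / trace (vertigo t \<rho>))
                     \<longlongrightarrow> binom_state m i j) at_top))"
proof (intro conjI allI impI)
  obtain N where N: "in_D N \<rho>" using assms(2) unfolding bounded_fock_support_def by blast
  define m0 where "m0 = (LEAST n. in_D n \<rho>)"
  have m0: "in_D m0 \<rho>" unfolding m0_def using N by (rule LeastI)
  have m0min: "\<forall>m'. m0 = Suc m' \<longrightarrow> \<not> in_D m' \<rho>"
  proof (intro allI impI)
    fix m' assume "m0 = Suc m'"
    then have "m' < m0" by simp
    then show "\<not> in_D m' \<rho>" unfolding m0_def by (rule not_less_Least)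
  qed
  show "\<exists>!m::nat. in_D m \<rho> \<and> (\<forall>m'. m = Suc m' \<longrightarrow> \<not> in_D m' \<rho>)"
  proof (rule ex1I[of _ m0])
    show "in_D m0 \<rho> \<and> (\<forall>m'. m0 = Suc m' \<longrightarrow> \<not> in_D m' \<rho>)" using m0 m0min by blast
  next
    fix m assume m: "in_D m \<rho> \<and> (\<forall>m'. m = Suc m' \<longrightarrow> \<not> in_D m' \<rho>)"
    show "m = m0"
    proof (rule ccontr)
      assume "m \<noteq> m0"
      then consider "m < m0" | "m0 < m" by linarith
      then show False
      proof cases
        case 1
        then obtain m' where m': "m0 = Suc m'" by (cases m0) auto
        with 1 have "m \<le> m'" by simp
        then have "in_D m' \<rho>" using in_D_mono[of m \<rho> m'] m by simp
        then show False using m0min m' by simp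
      next
        case 2
        then obtain m' where m': "m = Suc m'" by (cases m) auto
        with 2 have "m0 \<le> m'" by simp
        then have "in_D m' \<rho>" using in_D_mono[of m0 \<rho> m'] m0 by simp
        then show False using m m' by simp
      qed
    qed
  qed
next
  fix m i j
  assume m: "in_D m \<rho> \<and> (\<forall>m'. m = Suc m' \<longrightarrow> \<not> in_D m' \<rho>)"
  have supp: "\<And>i j. m < i \<or> m < j \<Longrightarrow> \<rho> i j = 0" using m unfolding in_D_def by blast
  have nz: "\<rho> m m \<noteq> 0" using diag_nz[OF assms(1)] m by blast
  show "((\<lambda>t. vertigo t \<rho> i j / Defs.trace (vertigo t \<rho>)) \<longlongrightarrow> binom_state m i j) at_top"
    by (rule ratio_lim[where \<rho>=\<rho> and m=m, OF supp nz])
qed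

end
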